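(* Let $f,g\in\mathbb B(X)$ with $f$ modular in $g$, and write $s=f_{g/1}$, $t=f_{g/0}$. Then, pointwise on $2^X$ (treating the $\{0,1\}$-valued games as Boolean-valued), $$\omega_f=\omega_g\,\omega_{\overline g}\,(\omega_s\lor\omega_t)\ \lor\ \omega_g\,\overline{\omega_{\overline g}}\,\omega_s\ \lor\ \overline{\omega_g}\,\omega_{\overline g}\,\omega_t\ \lor\ \overline{\omega_g}\,\overline{\omega_{\overline g}}\,\omega_{st}.$$ If moreover $f$ is monotonically modular in $g$, then $\omega_f=\omega_g\,\omega_s\lor\overline{\omega_g}\,\omega_t$.
   Context: $X$ is a fixed finite set of variables. An assignment over $U\subseteq X$ is a map $\mathbf u:U\to\{0,1\}$; $\mathbf u;\mathbf w$ is concatenation of assignments with disjoint domains. $\mathbb B(X)$ is the set of Boolean functions $\{0,1\}^X\to\{0,1\}$, combined pointwise ($st=s\land t$, $\overline f$ negation); $f_{x/c}$ is $f$ with $x$ fixed to $c$; $\mathrm{dep}(f)=\{x:f_{x/1}\ne f_{x/0}\}$; $f[x/s]=s f_{x/1}\lor\overline s f_{x/0}$. Modularity: $f$ is modular in $g$ if $g$ is not constant and there are $\ell\in\mathbb B(X)$, $z\in X$ with $\mathrm{dep}(\ell)\cap\mathrm{dep}(g)=\emptyset$ and $f=\ell[z/g]$; monotonically modular if moreover $\ell_{z/1}\ge\ell_{z/0}$. Then $f_{g/1}:=\ell_{z/1}$ and $f_{g/0}:=\ell_{z/0}$ (well defined). The dominating CGM assigns to $f$ the game $\omega_f:2^X\to\{0,1\}$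 with $\omega_f(S)=1$ iff there is $\mathbf u\in\{0,1\}^S$ with $f(\mathbf u;\mathbf w)=1$ for all $\mathbf w\in\{0,1\}^{X\setminus S}$. *)

theory Defs
  imports Main
begin

text \<open>The variable set X is the (finite) universe of a type 'x; an assignment over X
  is a map 'x \<Rightarrow> bool, and a Boolean function is a map (('x \<Rightarrow> bool) \<Rightarrow> bool).\<close>

type_synonym 'x bfun = "('x \<Rightarrow> bool) \<Rightarrow> bool"

definition fixv :: "'x bfun \<Rightarrow> 'x \<Rightarrow> bool \<Rightarrow> 'x bfun" where
  "fixv f x c = (\<lambda>a. f (a(x := c)))"

definition dep :: "'x bfun \<Rightarrow> 'x set" where
  "dep f = {x. fixv f x True \<noteq> fixv f x False}"

definition subst :: "'x bfun \<Rightarrow> 'x \<Rightarrow> 'x bfun \<Rightarrow> 'x bfun" where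
  "subst f x s = (\<lambda>a. (s a \<and> fixv f x True a) \<or> (\<not> s a \<and> fixv f x False a))"

definition const_bfun :: "'x bfun \<Rightarrow> bool" where
  "const_bfun g = (\<exists>c. \<forall>a. g a = c)"

text \<open>Dominating CGM: omega_f(S) holds iff some assignment u on S makes f true
  for every assignment w on X - S (assignments on S are restrictions of total maps).\<close>
definition omega :: "'x bfun \<Rightarrow> 'x set \<Rightarrow> bool" where
  "omega f S = (\<exists>u. \<forall>w. f (\<lambda>x. if x \<in> S then u x else w x))"

end

theory Submission
  imports Defs
begin

lemma dep_local_aux:
  fixes h :: "'x bfun"
  assumes "finite D"
  shows "\<And>a. {x. a x \<noteq> b x} \<subseteq> D \<Longrightarrow> (\<forall>x\<in>dep h. a x = b x) \<Longrightarrow> h a = h b"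
  using assms
proof (induction D rule: finite_induct)
  case empty then have "a = b" by auto then show ?case by simp
next
  case (insert x D' a)
  define a' where "a' = a(x := b x)"
  have s1: "{y. a' y \<noteq> b y} \<subseteq> D'" using insert(4) unfolding a'_def by auto
  have s2: "\<forall>y\<in>dep h. a' y = b y" using insert(5) unfolding a'_def by auto
  have "h a' = h b" by (rule insert(3)[OF s1 s2])
  moreover have "h a = h a'"
  proof (cases "a x = b x")
    case True then have "a' = a" unfolding a'_def by (simp add: fun_eq_iff)
    then show ?thesis by simp
  next
    case False
    then have "x \<notin> dep h" using insert(5) by auto
    then have e: "fixv h x True = fixv h x False" unfolding dep_def by auto
    have "\<forall>c d. h (a(x:=c)) = h (a(x:=d))"
    proof (intro allI)
      fix c d
      have "\<forall>c. h (a(x:=c)) = fixv h x False a"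
        using e unfolding fixv_def by (metis (full_types))
      then show "h (a(x:=c)) = h (a(x:=d))" by simp
    qed
    then have "h (a(x := a x)) = h (a(x := b x))" by blast
    then show ?thesis unfolding a'_def by simp
  qed
  ultimately show ?case by simp
qed

lemma dep_local:
  fixes h :: "('x::finite) bfun"
  assumes "\<forall>x\<in>dep h. a x = b x"
  shows "h a = h b"
  using dep_local_aux[where D=UNIV and h=h and a=a and b=b] assms by auto

lemma dep_fix_sub:
  "dep (fixv l z c) \<subseteq> dep l"
proof
  fix x assume x: "x \<in> dep (fixv l z c)"
  show "x \<in> dep l"
  proof (rule ccontr)
    assume "x \<notin> dep l"
    then have e: "fixv l x True = fixv l x False" unfolding dep_def by auto
    have "fixv (fixv l z c) x True = fixv (fixv l z c) x False"
    proof (cases "x = z")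
      case True then show ?thesis unfolding fixv_def by simp
    next
      case False
      show ?thesis
      proof
        fix a
        have "l ((a(z:=c))(x:=True)) = l ((a(z:=c))(x:=False))"
          using e unfolding fixv_def by metis
        then show "fixv (fixv l z c) x True a = fixv (fixv l z c) x False a"
          unfolding fixv_def using False by (simp add: fun_upd_twist)
      qed
    qed
    then show False using x unfolding dep_def by auto
  qed
qed

lemma omega_mono:
  assumes "\<forall>a. p a \<longrightarrow> q a" "omega p S" shows "omega q S"
  using assms unfolding omega_def by blast

lemma core:
  fixes g s t f :: "'x bfun" and A :: "'x set"
  assumes gA: "\<And>a b. (\<forall>x\<in>A. a x = b x) \<Longrightarrow> g a = g b"
    and sA: "\<And>a b. (\<forall>x. x \<notin> A \<longrightarrow> a x = b x) \<Longrightarrow> s a = s b"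
    and tA: "\<And>a b. (\<forall>x. x \<notin> A \<longrightarrow> a x = b x) \<Longrightarrow> t a = t b"
    and fe: "\<And>a. f a = ((g a \<and> s a) \<or> (\<not> g a \<and> t a))"
  shows "omega f S =
            ((omega g S \<and> omega (\<lambda>a. \<not> g a) S \<and> (omega s S \<or> omega t S)) \<or>
             (omega g S \<and> \<not> omega (\<lambda>a. \<not> g a) S \<and> omega s S) \<or>
             (\<not> omega g S \<and> omega (\<lambda>a. \<not> g a) S \<and> omega t S) \<or>
             (\<not> omega g S \<and> \<not> omega (\<lambda>a. \<not> g a) S \<and> omega (\<lambda>a. s a \<and> t a) S))"
proof -
  define M where "M u w = (\<lambda>x. if x \<in> S then u x else w x)" for u w :: "'x \<Rightarrow> bool"
  define C where "C p q = (\<lambda>x. if x \<in> A then p x else q x)" for p q :: "'x \<Rightarrow> bool"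
  have om: "omega h S = (\<exists>u. \<forall>w. h (M u w))" for h unfolding omega_def M_def by simp
  have gC: "g (M (C u1 u2) w) = g (M u1 w)" for u1 u2 w
    by (rule gA) (auto simp: M_def C_def)
  have sC: "s (M (C u1 u2) w) = s (M u2 w)" for u1 u2 w
    by (rule sA) (auto simp: M_def C_def)
  have tC: "t (M (C u1 u2) w) = t (M u2 w)" for u1 u2 w
    by (rule tA) (auto simp: M_def C_def)
  have gW: "g (M u (C w1 w2)) = g (M u w1)" for u w1 w2
    by (rule gA) (auto simp: M_def C_def)
  have sW: "s (M u (C w1 w2)) = s (M u w2)" for u w1 w2
    by (rule sA) (auto simp: M_def C_def)
  have tW: "t (M u (C w1 w2)) = t (M u w2)" for u w1 w2
    by (rule tA) (auto simp: M_def C_def)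
  have fwd: "(omega g S \<and> omega s S) \<or> (omega (\<lambda>a. \<not> g a) S \<and> omega t S)
     \<or> (omega s S \<and> omega t S \<and> omega (\<lambda>a. s a \<and> t a) S)" if "omega f S"
  proof -
    from that obtain u where u: "\<And>w. f (M u w)" unfolding om by blast
    show ?thesis
    proof (cases "\<forall>w. g (M u w)")
      case True
      then have "\<forall>w. s (M u w)" using u fe by blast
      then show ?thesis using True unfolding om by blast
    next
      case F1: False
      then obtain w4 where w4: "\<not> g (M u w4)" by blast
      show ?thesis
      proof (cases "\<forall>w. \<not> g (M u w)")
        case True
        then have "\<forall>w. t (M u w)" using u fe by blast
        then show ?thesis using True unfolding om by blast
      next
        case False
        then obtain w3 where w3: "g (M u w3)" by blast
        have "\<forall>w. s (M u w)"
        proof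
          fix w
          have "f (M u (C w3 w))" by (rule u)
          then show "s (M u w)" using fe[of "M u (C w3 w)"] gW[of u w3 w] sW[of u w3 w] w3 by blast
        qed
        moreover have "\<forall>w. t (M u w)"
        proof
          fix w
          have "f (M u (C w4 w))" by (rule u)
          then show "t (M u w)" using fe[of "M u (C w4 w)"] gW[of u w4 w] tW[of u w4 w] w4 by blast
        qed
        ultimately show ?thesis unfolding om by blast
      qed
    qed
  qed
  have b1: "omega f S" if "omega g S" "omega s S"
  proof -
    from that obtain u1 u2 where u1: "\<And>w. g (M u1 w)" and u2: "\<And>w. s (M u2 w)"
      unfolding om by blast
    have "\<forall>w. f (M (C u1 u2) w)" by (simp add: fe gC sC u1 u2)
    then show ?thesis unfolding om by blast
  qed
  have b2: "omega f S" if "omega (\<lambda>a. \<not> g a) S" "omega t S"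
  proof -
    from that obtain u1 u2 where u1: "\<And>w. \<not> g (M u1 w)" and u2: "\<And>w. t (M u2 w)"
      unfolding om by blast
    have "\<forall>w. f (M (C u1 u2) w)" by (simp add: fe gC tC u1 u2)
    then show ?thesis unfolding om by blast
  qed
  have b3: "omega f S" if "omega (\<lambda>a. s a \<and> t a) S"
    using omega_mono[OF _ that, of f] fe by blast
  show ?thesis using fwd b1 b2 b3 by blast
qed

theorem mainTheorem13:
  fixes f g l :: "('x::finite) bfun" and z :: 'x
  assumes g_nonconst: "\<not> const_bfun g"
    and disj: "dep l \<inter> dep g = {}"
    and f_eq: "f = subst l z g"
  defines "s \<equiv> fixv l z True"
    and "t \<equiv> fixv l z False"
  shows "(\<forall>S. omega f S =
            ((omega g S \<and> omega (\<lambda>a. \<not> g a) S \<and> (omega s S \<or> omega t S)) \<or>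
             (omega g S \<and> \<not> omega (\<lambda>a. \<not> g a) S \<and> omega s S) \<or>
             (\<not> omega g S \<and> omega (\<lambda>a. \<not> g a) S \<and> omega t S) \<or>
             (\<not> omega g S \<and> \<not> omega (\<lambda>a. \<not> g a) S \<and> omega (\<lambda>a. s a \<and> t a) S)))
         \<and> ((\<forall>a. t a \<longrightarrow> s a) \<longrightarrow>
            (\<forall>S. omega f S = ((omega g S \<and> omega s S) \<or> (\<not> omega g S \<and> omega t S))))"
proof -
  let ?A = "dep g"
  have gA: "\<And>a b. (\<forall>x\<in>?A. a x = b x) \<Longrightarrow> g a = g b"
    using dep_local[of g] by blast
  have sA: "\<And>a b. (\<forall>x. x \<notin> ?A \<longrightarrow> a x = b x) \<Longrightarrow> s a = s b"
  proof -
    fix a b :: "'x \<Rightarrow> bool" assume h: "\<forall>x. x \<notin> ?A \<longrightarrow> a x = b x"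
    have "\<forall>x\<in>dep s. a x = b x" using h dep_fix_sub[of l z True] disj unfolding s_def by blast
    then show "s a = s b" using dep_local[of s a b] by blast
  qed
  have tA: "\<And>a b. (\<forall>x. x \<notin> ?A \<longrightarrow> a x = b x) \<Longrightarrow> t a = t b"
  proof -
    fix a b :: "'x \<Rightarrow> bool" assume h: "\<forall>x. x \<notin> ?A \<longrightarrow> a x = b x"
    have "\<forall>x\<in>dep t. a x = b x" using h dep_fix_sub[of l z False] disj unfolding t_def by blast
    then show "t a = t b" using dep_local[of t a b] by blast
  qed
  have fe: "\<And>a. f a = ((g a \<and> s a) \<or> (\<not> g a \<and> t a))"
    unfolding f_eq subst_def s_def t_def by simp
  have P1: "\<forall>S. omega f S =
            ((omega g S \<and> omega (\<lambda>a. \<not> g a) S \<and> (omega s S \<or> omega t S)) \<or>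
             (omega g S \<and> \<not> omega (\<lambda>a. \<not> g a) S \<and> omega s S) \<or>
             (\<not> omega g S \<and> omega (\<lambda>a. \<not> g a) S \<and> omega t S) \<or>
             (\<not> omega g S \<and> \<not> omega (\<lambda>a. \<not> g a) S \<and> omega (\<lambda>a. s a \<and> t a) S))"
  proof
    fix S
    show "omega f S =
            ((omega g S \<and> omega (\<lambda>a. \<not> g a) S \<and> (omega s S \<or> omega t S)) \<or>
             (omega g S \<and> \<not> omega (\<lambda>a. \<not> g a) S \<and> omega s S) \<or>
             (\<not> omega g S \<and> omega (\<lambda>a. \<not> g a) S \<and> omega t S) \<or>
             (\<not> omega g S \<and> \<not> omega (\<lambda>a. \<not> g a) S \<and> omega (\<lambda>a. s a \<and> t a) S))"
      by (rule core[where g=g and s=s and t=t and f=f and A="dep g" and S=S, OF gA sA tA fe])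
  qed
  moreover have "(\<forall>a. t a \<longrightarrow> s a) \<longrightarrow>
            (\<forall>S. omega f S = ((omega g S \<and> omega s S) \<or> (\<not> omega g S \<and> omega t S)))"
  proof (intro impI allI)
    fix S assume m: "\<forall>a. t a \<longrightarrow> s a"
    have ts: "omega t S \<Longrightarrow> omega s S" using omega_mono[OF m] by blast
    have tst: "omega t S \<Longrightarrow> omega (\<lambda>a. s a \<and> t a) S"
      using omega_mono[of t "\<lambda>a. s a \<and> t a"] m by blast
    have st: "omega (\<lambda>a. s a \<and> t a) S \<Longrightarrow> omega t S"
      using omega_mono[of "\<lambda>a. s a \<and> t a" t] by blast
    show "omega f S = ((omega g S \<and> omega s S) \<or> (\<not> omega g S \<and> omega t S))"
      using P1[rule_format, of S] ts tst st by blast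
  qed
  ultimately show ?thesis by (rule conjI)
qed

end
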